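(* If $G$ is a strongly connected prime tournament, then $G$ is triangle-connected.
   Context: A tournament is a finite, non-null, loopless directed graph in which for any two distinct vertices $u,v$ there is exactly one edge with both ends in $\{u,v\}$; write $u\to v$ for the edge from $u$ to $v$. A homogeneous set of $G$ is a set $X\subseteq V(G)$ such that each $v\in V(G)\setminus X$ either has $v\to x$ for all $x\in X$ or $x\to v$ for all $x\in X$; $G$ is prime if every homogeneous set $X$ satisfies $|X|\le1$ or $X=V(G)$. $G$ is strongly connected if for any two vertices $u,v$ there are directed paths from $u$ to $v$ and from $v$ to $u$. Two cyclic triangles (3-vertex directed cycles) in $G$ are adjacent if they share exactly two vertices; two cyclic triangles $C,C'$ are triangle-connected if there is a sequence $C_1,\dots,C_n$ ($n\ge1$) of cyclic triangles with $C_1=C$, $C_n=C'$, and $C_i$ adjacent to $C_{i+1}$ for all $1\le i\le n-1$. A tournament is triangle-connected if it is strongly connected and any two of its cyclic triangles are triangle-connected. *)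

theory Defs
  imports Main
begin

definition tournament :: "'a set \<Rightarrow> ('a \<Rightarrow> 'a \<Rightarrow> bool) \<Rightarrow> bool" where
  "tournament V E \<longleftrightarrow> finite V \<and> V \<noteq> {} \<and>
     (\<forall>u v. E u v \<longrightarrow> u \<in> V \<and> v \<in> V) \<and>
     (\<forall>v. \<not> E v v) \<and>
     (\<forall>u\<in>V. \<forall>v\<in>V. u \<noteq> v \<longrightarrow> (E u v \<longleftrightarrow> \<not> E v u))"

definition homogeneous :: "'a set \<Rightarrow> ('a \<Rightarrow> 'a \<Rightarrow> bool) \<Rightarrow> 'a set \<Rightarrow> bool" where
  "homogeneous V E X \<longleftrightarrow> X \<subseteq> V \<and>
     (\<forall>v\<in>V - X. (\<forall>x\<in>X. E v x) \<or> (\<forall>x\<in>X. E x v))"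

definition prime_tournament :: "'a set \<Rightarrow> ('a \<Rightarrow> 'a \<Rightarrow> bool) \<Rightarrow> bool" where
  "prime_tournament V E \<longleftrightarrow>
     (\<forall>X. homogeneous V E X \<longrightarrow> card X \<le> 1 \<or> X = V)"

definition strongly_connected :: "'a set \<Rightarrow> ('a \<Rightarrow> 'a \<Rightarrow> bool) \<Rightarrow> bool" where
  "strongly_connected V E \<longleftrightarrow>
     (\<forall>u\<in>V. \<forall>v\<in>V. (\<lambda>x y. x \<in> V \<and> y \<in> V \<and> E x y)\<^sup>*\<^sup>* u v)"

definition cyclic_triangle :: "'a set \<Rightarrow> ('a \<Rightarrow> 'a \<Rightarrow> bool) \<Rightarrow> 'a set \<Rightarrow> bool" where
  "cyclic_triangle V E T \<longleftrightarrow> T \<subseteq> V \<and>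
     (\<exists>a b c. T = {a, b, c} \<and> a \<noteq> b \<and> b \<noteq> c \<and> a \<noteq> c \<and> E a b \<and> E b c \<and> E c a)"

definition adjacent_triangles :: "'a set \<Rightarrow> ('a \<Rightarrow> 'a \<Rightarrow> bool) \<Rightarrow> 'a set \<Rightarrow> 'a set \<Rightarrow> bool" where
  "adjacent_triangles V E C C' \<longleftrightarrow>
     cyclic_triangle V E C \<and> cyclic_triangle V E C' \<and> card (C \<inter> C') = 2"

definition triangle_connected_pair :: "'a set \<Rightarrow> ('a \<Rightarrow> 'a \<Rightarrow> bool) \<Rightarrow> 'a set \<Rightarrow> 'a set \<Rightarrow> bool" where
  "triangle_connected_pair V E C C' \<longleftrightarrow>
     cyclic_triangle V E C \<and> cyclic_triangle V E C' \<and> (adjacent_triangles V E)\<^sup>*\<^sup>* C C'"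

definition triangle_connected :: "'a set \<Rightarrow> ('a \<Rightarrow> 'a \<Rightarrow> bool) \<Rightarrow> bool" where
  "triangle_connected V E \<longleftrightarrow> strongly_connected V E \<and>
     (\<forall>C C'. cyclic_triangle V E C \<longrightarrow> cyclic_triangle V E C' \<longrightarrow>
        triangle_connected_pair V E C C')"

end

theory Submission
  imports Defs
begin

lemma tE: "tournament V E \<Longrightarrow> E u v \<Longrightarrow> u \<in> V \<and> v \<in> V"
  unfolding tournament_def by blast
lemma tasym: "tournament V E \<Longrightarrow> E u v \<Longrightarrow> \<not> E v u"
  unfolding tournament_def by metis
lemma tneq: "tournament V E \<Longrightarrow> E u v \<Longrightarrow> u \<noteq> v"
  unfolding tournament_def by metis
lemma ttot: "tournament V E \<Longrightarrow> u \<in> V \<Longrightarrow> v \<in> V \<Longrightarrow> u \<noteq> v \<Longrightarrow> E u v \<or> E v u"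
  unfolding tournament_def by metis

lemma tri_of: assumes "tournament V E" "E a b" "E b c" "E c a"
  shows "cyclic_triangle V E {a,b,c}"
  using assms tE[OF assms(1)] tneq[OF assms(1)] unfolding cyclic_triangle_def by blast

lemma adjI: assumes "cyclic_triangle V E S1" "cyclic_triangle V E S2" "S1 \<inter> S2 = {p,q}" "p \<noteq> q"
  shows "adjacent_triangles V E S1 S2"
  using assms unfolding adjacent_triangles_def by simp

lemma adj_sym: "adjacent_triangles V E S T \<Longrightarrow> adjacent_triangles V E T S"
  unfolding adjacent_triangles_def by (simp add: Int_commute)

lemma adjs_sym: "(adjacent_triangles V E)\<^sup>*\<^sup>* S T \<Longrightarrow> (adjacent_triangles V E)\<^sup>*\<^sup>* T S"
  by (induction rule: rtranclp_induct) (auto intro: adj_sym converse_rtranclp_into_rtranclp)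

lemma adj_ne: "adjacent_triangles V E S T \<Longrightarrow> S \<inter> T \<noteq> {}"
  unfolding adjacent_triangles_def by auto

lemma lift: assumes tour: "tournament V E" and "E a b" "E b c" "E c a" "v \<in> V" "v \<notin> {a,b,c}"
  "\<not>(\<forall>z\<in>{a,b,c}. E v z)" "\<not>(\<forall>z\<in>{a,b,c}. E z v)"
  shows "\<exists>p q. p\<in>{a,b,c} \<and> q\<in>{a,b,c} \<and> E p q \<and> E q v \<and> E v p"
proof -
  have "a \<in> V" "b \<in> V" "c \<in> V" using tE[OF tour] assms by blast+
  hence "E v a \<or> E a v" "E v b \<or> E b v" "E v c \<or> E c v" using ttot[OF tour] assms by blast+
  thus ?thesis using assms by blast
qed

definition Rd :: "'a set \<Rightarrow> ('a \<Rightarrow> 'a \<Rightarrow> bool) \<Rightarrow> 'a set \<Rightarrow> 'a set \<Rightarrow> 'a set \<Rightarrow> bool" where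
  "Rd V E D S S' \<longleftrightarrow> adjacent_triangles V E S S' \<and> S \<subseteq> D \<and> S' \<subseteq> D"

lemma Rd_tri: "(Rd V E D)\<^sup>*\<^sup>* T0 T \<Longrightarrow> cyclic_triangle V E T0 \<Longrightarrow> T0 \<subseteq> D \<Longrightarrow> cyclic_triangle V E T \<and> T \<subseteq> D"
  by (induction rule: rtranclp_induct) (auto simp: Rd_def adjacent_triangles_def)

lemma Rd_adj: "(Rd V E D)\<^sup>*\<^sup>* T0 T \<Longrightarrow> (adjacent_triangles V E)\<^sup>*\<^sup>* T0 T"
  by (induction rule: rtranclp_induct) (auto simp: Rd_def intro: rtranclp.rtrancl_into_rtrancl)

lemma propag:
  assumes tour: "tournament V E" and "(Rd V E D)\<^sup>*\<^sup>* T0 T"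
   and unif: "\<And>T. (Rd V E D)\<^sup>*\<^sup>* T0 T \<Longrightarrow> (\<forall>z\<in>T. E v z) \<or> (\<forall>z\<in>T. E z v)"
  shows "((\<forall>z\<in>T0. E v z) \<longrightarrow> (\<forall>z\<in>T. E v z)) \<and> ((\<forall>z\<in>T0. E z v) \<longrightarrow> (\<forall>z\<in>T. E z v))"
  using assms(2)
proof (induction rule: rtranclp_induct)
  case base thus ?case by simp
next
  case (step T1 T2)
  from step(2) obtain z where z: "z \<in> T1" "z \<in> T2" using adj_ne unfolding Rd_def by blast
  have u2: "(\<forall>z\<in>T2. E v z) \<or> (\<forall>z\<in>T2. E z v)" using unif step(1,2) by (meson rtranclp.rtrancl_into_rtrancl)
  show ?case using step(3) u2 z tasym[OF tour] by metis
qed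

lemma cyc_form: "cyclic_triangle V E T \<Longrightarrow> \<exists>a b c. T={a,b,c} \<and> E a b \<and> E b c \<and> E c a"
  unfolding cyclic_triangle_def by blast

lemma unif_inD:
  assumes tour: "tournament V E" and T0: "cyclic_triangle V E T0" "T0 \<subseteq> D"
    and RT: "(Rd V E D)\<^sup>*\<^sup>* T0 T" and v: "v \<in> V" "v \<in> D" "v \<notin> \<Union>{T. (Rd V E D)\<^sup>*\<^sup>* T0 T}"
  shows "(\<forall>z\<in>T. E v z) \<or> (\<forall>z\<in>T. E z v)"
proof (rule ccontr)
  assume nu: "\<not> ?thesis"
  have TT: "cyclic_triangle V E T" "T \<subseteq> D" using Rd_tri[OF RT T0] by auto
  obtain a b c where abc: "T={a,b,c}" "E a b" "E b c" "E c a" using cyc_form[OF TT(1)] by blast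
  have vT: "v \<notin> {a,b,c}" using v(3) RT abc(1) by blast
  obtain p q where pq: "p\<in>{a,b,c}" "q\<in>{a,b,c}" "E p q" "E q v" "E v p"
    using lift[OF tour abc(2-4) v(1) vT] nu abc(1) by blast
  have tri2: "cyclic_triangle V E {v,p,q}" using tri_of[OF tour pq(5,3,4)] .
  have "p \<noteq> q" using tneq[OF tour pq(3)] .
  hence "T \<inter> {v,p,q} = {p,q}" using vT pq(1,2) abc(1) by auto
  hence "adjacent_triangles V E T {v,p,q}" using adjI[OF TT(1) tri2] \<open>p\<noteq>q\<close> by blast
  moreover have "{v,p,q} \<subseteq> D" using v(2) pq(1,2) abc(1) TT(2) by auto
  ultimately have "Rd V E D T {v,p,q}" using TT(2) unfolding Rd_def by blast
  hence "(Rd V E D)\<^sup>*\<^sup>* T0 {v,p,q}" using RT by (meson rtranclp.rtrancl_into_rtrancl)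
  thus False using v(3) by blast
qed

lemma comp_hom:
  assumes tour: "tournament V E" and T0: "cyclic_triangle V E T0" "T0 \<subseteq> D"
    and unif: "\<And>v T. v \<in> V \<Longrightarrow> v \<notin> \<Union>{T. (Rd V E D)\<^sup>*\<^sup>* T0 T} \<Longrightarrow> (Rd V E D)\<^sup>*\<^sup>* T0 T
       \<Longrightarrow> (\<forall>z\<in>T. E v z) \<or> (\<forall>z\<in>T. E z v)"
  shows "homogeneous V E (\<Union>{T. (Rd V E D)\<^sup>*\<^sup>* T0 T})"
proof -
  let ?X = "\<Union>{T. (Rd V E D)\<^sup>*\<^sup>* T0 T}"
  have "?X \<subseteq> V" using Rd_tri[OF _ T0] unfolding cyclic_triangle_def by blast
  moreover have "(\<forall>x\<in>?X. E v x) \<or> (\<forall>x\<in>?X. E x v)" if "v \<in> V - ?X" for v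
  proof -
    have u0: "(\<forall>z\<in>T0. E v z) \<or> (\<forall>z\<in>T0. E z v)" using unif[of v T0] that by blast
    have "\<And>T. (Rd V E D)\<^sup>*\<^sup>* T0 T \<Longrightarrow> ((\<forall>z\<in>T0. E v z) \<longrightarrow> (\<forall>z\<in>T. E v z)) \<and> ((\<forall>z\<in>T0. E z v) \<longrightarrow> (\<forall>z\<in>T. E z v))"
      using propag[OF tour _ unif] that by blast
    thus ?thesis using u0 by blast
  qed
  ultimately show ?thesis unfolding homogeneous_def by blast
qed

lemma card_tri: "cyclic_triangle V E T \<Longrightarrow> card T = 3"
  unfolding cyclic_triangle_def by auto

lemma tV: "tournament V E \<Longrightarrow> finite V"
  unfolding tournament_def by blast

lemma keyL:
  assumes tour: "tournament V E" and pr: "prime_tournament V E" and xy: "E x y"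
    and T0: "cyclic_triangle V E T0" "T0 \<subseteq> D" and D: "D = {v. E y v \<and> E v x}"
    and w: "E y w" "E w x" and nc: "\<not> (adjacent_triangles V E)\<^sup>*\<^sup>* T0 {x,y,w}"
  shows False
proof -
  let ?X = "\<Union>{T. (Rd V E D)\<^sup>*\<^sup>* T0 T}"
  have conn: False if p: "p \<in> D" and c: "(adjacent_triangles V E)\<^sup>*\<^sup>* T0 {x,y,p}" for p
  proof (cases "p = w")
    case True thus False using c nc by simp
  next
    case False
    have e: "E y p" "E p x" using p D by auto
    have t1: "cyclic_triangle V E {x,y,p}" using tri_of[OF tour xy e] .
    have t2: "cyclic_triangle V E {x,y,w}" using tri_of[OF tour xy w] .
    have "{x,y,p} \<inter> {x,y,w} = {x,y}" using False tneq[OF tour] e w xy by auto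
    hence "adjacent_triangles V E {x,y,p} {x,y,w}" using adjI[OF t1 t2] tneq[OF tour xy] by blast
    thus False using c nc by (meson rtranclp.rtrancl_into_rtrancl)
  qed
  have unif: "(\<forall>z\<in>T. E v z) \<or> (\<forall>z\<in>T. E z v)"
    if v: "v \<in> V" "v \<notin> ?X" and RT: "(Rd V E D)\<^sup>*\<^sup>* T0 T" for v T
  proof (cases "v \<in> D")
    case True show ?thesis using unif_inD[OF tour T0 RT v(1) True v(2)] by blast
  next
    case vD: False
    show ?thesis
    proof (rule ccontr)
      assume nu: "\<not> ?thesis"
      have TT: "cyclic_triangle V E T" "T \<subseteq> D" using Rd_tri[OF RT T0] by auto
      obtain a b c where abc: "T={a,b,c}" "E a b" "E b c" "E c a" using cyc_form[OF TT(1)] by blast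
      have vT: "v \<notin> {a,b,c}" using v(2) RT abc(1) by blast
      obtain p q where pq: "p\<in>{a,b,c}" "q\<in>{a,b,c}" "E p q" "E q v" "E v p"
        using lift[OF tour abc(2-4) v(1) vT] nu abc(1) by blast
      have pD: "E y p" "E p x" "E y q" "E q x" using pq(1,2) abc(1) TT(2) D by auto
      have tri2: "cyclic_triangle V E {v,p,q}" using tri_of[OF tour pq(5,3,4)] .
      have "p \<noteq> q" using tneq[OF tour pq(3)] .
      hence "T \<inter> {v,p,q} = {p,q}" using vT pq(1,2) abc(1) by auto
      hence "adjacent_triangles V E T {v,p,q}" using adjI[OF TT(1) tri2] \<open>p\<noteq>q\<close> by blast
      hence c2: "(adjacent_triangles V E)\<^sup>*\<^sup>* T0 {v,p,q}" using Rd_adj[OF RT] by (meson rtranclp.rtrancl_into_rtrancl)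
      have vx: "v \<noteq> x" using pq(5) pD(2) tasym[OF tour] by blast
      have vy: "v \<noteq> y" using pq(4) pD(3) tasym[OF tour] by blast
      have xV: "x \<in> V" "y \<in> V" using tE[OF tour xy] by auto
      show False
      proof (cases "E x v")
        case True
        have tz: "cyclic_triangle V E {x,v,p}" using tri_of[OF tour True pq(5) pD(2)] .
        have tp: "cyclic_triangle V E {x,y,p}" using tri_of[OF tour xy pD(1,2)] .
        have "{v,p,q} \<inter> {x,v,p} = {v,p}" using vx tneq[OF tour] pD by auto
        hence a1: "adjacent_triangles V E {v,p,q} {x,v,p}" using adjI[OF tri2 tz] tneq[OF tour pq(5)] by blast
        have "{x,v,p} \<inter> {x,y,p} = {x,p}" using vx vy tneq[OF tour] pD by auto
        hence a2: "adjacent_triangles V E {x,v,p} {x,y,p}" using adjI[OF tz tp] tneq[OF tour pD(2)] by blast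
        have "(adjacent_triangles V E)\<^sup>*\<^sup>* T0 {x,y,p}" using c2 a1 a2 by (meson rtranclp.rtrancl_into_rtrancl)
        thus False using conn pq(1) abc(1) TT(2) by blast
      next
        case False
        hence "E v x" using ttot[OF tour v(1) xV(1) vx] by blast
        hence "\<not> E y v" using vD D by blast
        hence vy': "E v y" using ttot[OF tour v(1) xV(2) vy] by blast
        have tz: "cyclic_triangle V E {v,y,q}" using tri_of[OF tour vy' pD(3) pq(4)] .
        have tq: "cyclic_triangle V E {x,y,q}" using tri_of[OF tour xy pD(3,4)] .
        have "{v,p,q} \<inter> {v,y,q} = {v,q}" using vy tneq[OF tour] pD by auto
        hence a1: "adjacent_triangles V E {v,p,q} {v,y,q}" using adjI[OF tri2 tz] tneq[OF tour pq(4)] by blast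
        have "{v,y,q} \<inter> {x,y,q} = {y,q}" using vx vy tneq[OF tour] pD xy by auto
        hence a2: "adjacent_triangles V E {v,y,q} {x,y,q}" using adjI[OF tz tq] tneq[OF tour pD(3)] by blast
        have "(adjacent_triangles V E)\<^sup>*\<^sup>* T0 {x,y,q}" using c2 a1 a2 by (meson rtranclp.rtrancl_into_rtrancl)
        thus False using conn pq(2) abc(1) TT(2) by blast
      qed
    qed
  qed
  have hom: "homogeneous V E ?X" using comp_hom[OF tour T0 unif] by blast
  have XV: "?X \<subseteq> V" using hom unfolding homogeneous_def by blast
  hence fin: "finite ?X" using tV[OF tour] finite_subset by blast
  have "T0 \<subseteq> ?X" by blast
  hence "card T0 \<le> card ?X" using card_mono[OF fin] by blast
  hence c3: "card ?X \<ge> 3" using card_tri[OF T0(1)] by simp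
  have "x \<notin> D" using D tneq[OF tour] by blast
  moreover have "?X \<subseteq> D" using Rd_tri[OF _ T0] by blast
  ultimately have "?X \<noteq> V" using tE[OF tour xy] by blast
  thus False using pr hom c3 unfolding prime_tournament_def by force
qed

lemma rot: assumes "cyclic_triangle V E T" "a \<in> T"
  shows "\<exists>x y. T={a,x,y} \<and> E a x \<and> E x y \<and> E y a"
proof -
  obtain a1 b1 c1 where h: "T={a1,b1,c1}" "E a1 b1" "E b1 c1" "E c1 a1" using cyc_form[OF assms(1)] by blast
  from assms(2) h(1) consider "a=a1" | "a=b1" | "a=c1" by blast
  thus ?thesis
  proof cases
    case 1 thus ?thesis using h by blast
  next
    case 2 thus ?thesis using h by (intro exI[of _ c1] exI[of _ a1]) auto
  next
    case 3 thus ?thesis using h by (intro exI[of _ a1] exI[of _ b1]) auto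
  qed
qed

lemma adjE: assumes "tournament V E" "cyclic_triangle V E S1" "cyclic_triangle V E S2" "S1 \<inter> S2 = {p,q}" "E p q"
  shows "adjacent_triangles V E S1 S2"
  using adjI[OF assms(2-4)] tneq[OF assms(1,5)] by blast

theorem theorem4p1:
  fixes V :: "'a set" and E :: "'a \<Rightarrow> 'a \<Rightarrow> bool"
  assumes "tournament V E"
    and "strongly_connected V E"
    and "prime_tournament V E"
  shows "triangle_connected V E"
proof -
  note tour = assms(1) and pr = assms(3)
  have "(adjacent_triangles V E)\<^sup>*\<^sup>* C C'" if C: "cyclic_triangle V E C" and C': "cyclic_triangle V E C'" for C C'
  proof (rule ccontr)
    assume nc: "\<not> (adjacent_triangles V E)\<^sup>*\<^sup>* C C'"
    let ?X = "\<Union>{T. (Rd V E V)\<^sup>*\<^sup>* C T}"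
    have CV: "C \<subseteq> V" using C unfolding cyclic_triangle_def by blast
    have hom: "homogeneous V E ?X"
      using comp_hom[OF tour C CV] unif_inD[OF tour C CV] by blast
    have XV: "?X \<subseteq> V" using hom unfolding homogeneous_def by blast
    hence fin: "finite ?X" using tV[OF tour] finite_subset by blast
    have "C \<subseteq> ?X" by blast
    hence "card C \<le> card ?X" using card_mono[OF fin] by blast
    hence c3: "card ?X \<ge> 3" using card_tri[OF C] by simp
    hence XeqV: "?X = V" using pr hom unfolding prime_tournament_def by force
    obtain a b c where abc: "C'={a,b,c}" "E a b" "E b c" "E c a" using cyc_form[OF C'] by blast
    have "a \<in> V" using tE[OF tour abc(2)] by blast
    then obtain T where RT: "(Rd V E V)\<^sup>*\<^sup>* C T" and aT: "a \<in> T" using XeqV by blast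
    have cT: "(adjacent_triangles V E)\<^sup>*\<^sup>* C T" using Rd_adj[OF RT] .
    have triT: "cyclic_triangle V E T" using Rd_tri[OF RT C CV] by blast
    obtain x y where xy: "T={a,x,y}" "E a x" "E x y" "E y a" using rot[OF triT aT] by blast
    have ncT: "\<not> (adjacent_triangles V E)\<^sup>*\<^sup>* T C'" using cT nc by (meson rtranclp_trans)
    have bad2: False if "adjacent_triangles V E T Z" "adjacent_triangles V E Z C'" for Z
      using that ncT by (meson rtranclp.rtrancl_into_rtrancl rtranclp.rtrancl_refl)
    have bad3: False if "adjacent_triangles V E T Z" "adjacent_triangles V E Z Z'" "adjacent_triangles V E Z' C'" for Z Z'
      using that ncT by (meson rtranclp.rtrancl_into_rtrancl rtranclp.rtrancl_refl)
    have nab: "x \<noteq> c" "y \<noteq> b" using tasym[OF tour] abc xy by blast+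
    have xb: "x \<noteq> b"
    proof
      assume "x = b"
      show False
      proof (cases "y = c")
        case True thus False using ncT \<open>x = b\<close> xy abc by simp
      next
        case False
        have "T \<inter> C' = {a,b}" using False \<open>x = b\<close> xy abc tneq[OF tour] by auto
        thus False using adjE[OF tour triT C' _ abc(2)] ncT by blast
      qed
    qed
    have yc: "y \<noteq> c"
    proof
      assume "y = c"
      have "T \<inter> C' = {c,a}" using xb \<open>y = c\<close> xy abc tneq[OF tour] by auto
      thus False using adjE[OF tour triT C' _ abc(4)] ncT by blast
    qed
    have Vs: "a \<in> V" "b \<in> V" "c \<in> V" "x \<in> V" "y \<in> V" using tE[OF tour] abc xy by blast+
    have cx: "E c x"
    proof (rule ccontr)
      assume "\<not> E c x"
      hence e: "E x c" using ttot[OF tour Vs(3,4)] nab by blast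
      have t: "cyclic_triangle V E {a,x,c}" using tri_of[OF tour xy(2) e abc(4)] .
      have "T \<inter> {a,x,c} = {a,x}" using xy abc nab yc tneq[OF tour] by auto
      hence 1: "adjacent_triangles V E T {a,x,c}" using adjE[OF tour triT t _ xy(2)] by blast
      have "{a,x,c} \<inter> C' = {c,a}" using xy abc nab xb tneq[OF tour] by auto
      hence 2: "adjacent_triangles V E {a,x,c} C'" using adjE[OF tour t C' _ abc(4)] by blast
      show False using bad2[OF 1 2] .
    qed
    have yb: "E y b"
    proof (rule ccontr)
      assume "\<not> E y b"
      hence e: "E b y" using ttot[OF tour Vs(5,2)] nab by blast
      have t: "cyclic_triangle V E {a,b,y}" using tri_of[OF tour abc(2) e xy(4)] .
      have "T \<inter> {a,b,y} = {y,a}" using xy abc nab xb tneq[OF tour] by auto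
      hence 1: "adjacent_triangles V E T {a,b,y}" using adjE[OF tour triT t _ xy(4)] by blast
      have "{a,b,y} \<inter> C' = {a,b}" using xy abc nab yc tneq[OF tour] by auto
      hence 2: "adjacent_triangles V E {a,b,y} C'" using adjE[OF tour t C' _ abc(2)] by blast
      show False using bad2[OF 1 2] .
    qed
    show False
    proof (cases "E b x")
      case bx: True
      have t1: "cyclic_triangle V E {x,y,b}" using tri_of[OF tour xy(3) yb bx] .
      have "T \<inter> {x,y,b} = {x,y}" using xy abc nab xb yc tneq[OF tour] by auto
      hence 1: "adjacent_triangles V E T {x,y,b}" using adjE[OF tour triT t1 _ xy(3)] by blast
      show False
      proof (cases "E c y")
        case True
        have t2: "cyclic_triangle V E {y,b,c}" using tri_of[OF tour yb abc(3) True] .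
        have "{x,y,b} \<inter> {y,b,c} = {y,b}" using xy abc nab xb yc tneq[OF tour] by auto
        hence 2: "adjacent_triangles V E {x,y,b} {y,b,c}" using adjE[OF tour t1 t2 _ yb] by blast
        have "{y,b,c} \<inter> C' = {b,c}" using xy abc nab xb yc tneq[OF tour] by auto
        hence 3: "adjacent_triangles V E {y,b,c} C'" using adjE[OF tour t2 C' _ abc(3)] by blast
        show False using bad3[OF 1 2 3] .
      next
        case False
        hence yc': "E y c" using ttot[OF tour Vs(3,5)] yc by blast
        have sub: "C' \<subseteq> {v. E y v \<and> E v x}" using abc xy bx yb yc' cx by auto
        have "\<not> (adjacent_triangles V E)\<^sup>*\<^sup>* C' {x,y,a}"
        proof
          assume "(adjacent_triangles V E)\<^sup>*\<^sup>* C' {x,y,a}"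
          moreover have "{x,y,a} = T" using xy by auto
          ultimately show False using ncT adjs_sym by metis
        qed
        thus False using keyL[OF tour pr xy(3) C' sub refl xy(4,2)] by blast
      qed
    next
      case False
      hence xb': "E x b" using ttot[OF tour Vs(2,4)] xb by blast
      have t1: "cyclic_triangle V E {c,x,b}" using tri_of[OF tour cx xb' abc(3)] .
      have "{c,x,b} \<inter> C' = {b,c}" using xy abc nab xb yc tneq[OF tour] by auto
      hence 3: "adjacent_triangles V E {c,x,b} C'" using adjE[OF tour t1 C' _ abc(3)] by blast
      show False
      proof (cases "E y c")
        case True
        have t2: "cyclic_triangle V E {x,y,c}" using tri_of[OF tour xy(3) True cx] .
        have "T \<inter> {x,y,c} = {x,y}" using xy abc nab xb yc tneq[OF tour] by auto
        hence 1: "adjacent_triangles V E T {x,y,c}" using adjE[OF tour triT t2 _ xy(3)] by blast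
        have "{x,y,c} \<inter> {c,x,b} = {c,x}" using xy abc nab xb yc tneq[OF tour] by auto
        hence 2: "adjacent_triangles V E {x,y,c} {c,x,b}" using adjE[OF tour t2 t1 _ cx] by blast
        show False using bad3[OF 1 2 3] .
      next
        case False
        hence cy: "E c y" using ttot[OF tour Vs(3,5)] yc by blast
        have sub: "T \<subseteq> {v. E c v \<and> E v b}" using abc xy xb' yb cy cx by auto
        have "\<not> (adjacent_triangles V E)\<^sup>*\<^sup>* T {b,c,a}"
        proof
          assume "(adjacent_triangles V E)\<^sup>*\<^sup>* T {b,c,a}"
          moreover have "{b,c,a} = C'" using abc by auto
          ultimately show False using ncT by metis
        qed
        thus False using keyL[OF tour pr abc(3) triT sub refl abc(4,2)] by blast
      qed
    qed
  qed
  thus ?thesis using assms(2) unfolding triangle_connected_def triangle_connected_pair_def by blast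
qed

end
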